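(* Let $M=(X,rk)$ be a matroid on a finite ground set $X$ with rank $r=rk(X)$, and let $j$ be a nonnegative integer. Then $f_1(M)<j+r$ if and only if \[[y^j]T_M(1,y)=\binom{|X|-j-1}{r-1}.\]
   Context: $T_M(x,y)=\sum_{A\subseteq X}(x-1)^{r-rk(A)}(y-1)^{|A|-rk(A)}$ is the Tutte polynomial of $M$, and $[y^j]f(y)$ denotes the coefficient of $y^j$. A flat of $M$ is a set $F\subseteq X$ with $F=\{e\in X: rk(F\cup\{e\})=rk(F)\}$; a hyperplane is a flat of rank $r-1$. $f_1(M)$ is the maximum size of a hyperplane of $M$, i.e. $f_1(M)=\max\{|F|: F\text{ a flat},\ rk(F)=r-1\}$. *)

theory Defs
  imports "HOL-Computational_Algebra.Polynomial"
begin

definition matroid :: "'a set \<Rightarrow> ('a set \<Rightarrow> nat) \<Rightarrow> bool" where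
  "matroid X rk \<longleftrightarrow> finite X \<and>
     (\<forall>A. A \<subseteq> X \<longrightarrow> rk A \<le> card A) \<and>
     (\<forall>A B. A \<subseteq> B \<and> B \<subseteq> X \<longrightarrow> rk A \<le> rk B) \<and>
     (\<forall>A B. A \<subseteq> X \<and> B \<subseteq> X \<longrightarrow> rk (A \<union> B) + rk (A \<inter> B) \<le> rk A + rk B)"

definition flat :: "'a set \<Rightarrow> ('a set \<Rightarrow> nat) \<Rightarrow> 'a set \<Rightarrow> bool" where
  "flat X rk F \<longleftrightarrow> F \<subseteq> X \<and> F = {e \<in> X. rk (F \<union> {e}) = rk F}"

definition f1 :: "'a set \<Rightarrow> ('a set \<Rightarrow> nat) \<Rightarrow> nat" where
  "f1 X rk = Max {card F | F. flat X rk F \<and> rk F = rk X - 1}"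

text \<open>The Tutte polynomial T_M(x,y) with x specialised to the integer x0,
  as a polynomial in y:
  sum over A of (x0-1)^(r - rk A) (y-1)^(|A| - rk A).  (Note 0^0 = 1.)\<close>
definition tutte_at_x :: "'a set \<Rightarrow> ('a set \<Rightarrow> nat) \<Rightarrow> int \<Rightarrow> int poly" where
  "tutte_at_x X rk x0 =
     (\<Sum>A\<in>Pow X. smult ((x0 - 1) ^ (rk X - rk A)) ([:-1, 1:] ^ (card A - rk A)))"

end

theory Submission
  imports Defs
begin

definition Pn :: "'a set \<Rightarrow> ('a set \<Rightarrow> nat) \<Rightarrow> int poly" where
  "Pn X rk = (\<Sum>A\<in>Pow X. if rk A < rk X \<and> rk X \<le> card A then [:-1,1:]^(card A - rk X) else 0)"

definition Qs :: "'a set \<Rightarrow> nat \<Rightarrow> int poly" where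
  "Qs X r = (\<Sum>A\<in>Pow X. if r \<le> card A then [:-1,1:]^(card A - r) else 0)"

lemma sum_Pow_insert:
  assumes "finite X" "e \<notin> X"
  shows "(\<Sum>A\<in>Pow (insert e X). f A) = (\<Sum>A\<in>Pow X. f A) + (\<Sum>A\<in>Pow X. f (insert e A))"
proof -
  have d: "Pow X \<inter> insert e ` Pow X = {}" using assms(2) by auto
  have i: "inj_on (insert e) (Pow X)" using assms(2) unfolding inj_on_def
    by (metis PowD insert_ident subsetD)
  show ?thesis unfolding Pow_insert using d i assms(1)
    by (simp add: sum.union_disjoint sum.reindex)
qed

lemma sum_card_ind:
  assumes "finite X"
  shows "(\<Sum>A\<in>Pow X. (if card A = k then (1::int poly) else 0)) = [:int (card X choose k):]"
proof -
  have "(\<Sum>A\<in>Pow X. (if card A = k then (1::int poly) else 0)) = of_nat (card {A\<in>Pow X. card A = k})"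
    using assms by (simp add: sum.If_cases Int_def)
  also have "{A\<in>Pow X. card A = k} = {B. B \<subseteq> X \<and> card B = k}" by auto
  also have "card \<dots> = card X choose k" using assms by (rule n_subsets)
  finally show ?thesis by (simp add: of_nat_poly)
qed

lemma Y_mult: "q + [:-1,1:] * q = pCons 0 (q::int poly)"
  by (simp add: algebra_simps)

lemma Qs_insert:
  assumes "finite X" "e \<notin> X" "r \<ge> 1"
  shows "Qs (insert e X) r = pCons 0 (Qs X r) + [:int (card X choose (r-1)):]"
proof -
  have h: "(if r \<le> card (insert e A) then [:-1,1:]^(card (insert e A) - r) else 0)
     = [:-1,1:] * (if r \<le> card A then [:-1,1:]^(card A - r) else 0) + (if card A = r - 1 then (1::int poly) else 0)"
    if "A \<in> Pow X" for A
  proof -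
    have "finite A" "e \<notin> A" using that assms by (auto intro: finite_subset)
    then have c: "card (insert e A) = Suc (card A)" by simp
    show ?thesis unfolding c using assms(3)
      by (cases "r \<le> card A") (auto simp: Suc_diff_le)
  qed
  have "Qs (insert e X) r = Qs X r + (\<Sum>A\<in>Pow X. [:-1,1:] * (if r \<le> card A then [:-1,1:]^(card A - r) else 0) + (if card A = r - 1 then (1::int poly) else 0))"
    unfolding Qs_def sum_Pow_insert[OF assms(1,2)] by (rule arg_cong[where f="\<lambda>u. _ + u"], rule sum.cong, simp, rule h)
  also have "\<dots> = Qs X r + [:-1,1:] * Qs X r + [:int (card X choose (r-1)):]"
    by (simp add: sum.distrib sum_distrib_left Qs_def sum_card_ind assms(1))
  finally show ?thesis using Y_mult by simp
qed

lemma Qs_coeff: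
  assumes "finite X" "r \<ge> 1"
  shows "coeff (Qs X r) j = (if j + 1 \<le> card X then int ((card X - j - 1) choose (r - 1)) else 0)"
  using assms(1)
proof (induction X arbitrary: j rule: finite_induct)
  case empty
  then show ?case using assms(2) by (simp add: Qs_def)
next
  case (insert e X)
  show ?case
  proof (cases j)
    case 0
    then show ?thesis using Qs_insert[OF insert(1,2) assms(2)] insert by simp
  next
    case (Suc k)
    then show ?thesis using Qs_insert[OF insert(1,2) assms(2)] insert by simp
  qed
qed


lemma mat_fin: "matroid X rk \<Longrightarrow> finite X" by (simp add: matroid_def)
lemma mat_card: "matroid X rk \<Longrightarrow> A \<subseteq> X \<Longrightarrow> rk A \<le> card A" by (simp add: matroid_def)
lemma mat_mono: "matroid X rk \<Longrightarrow> A \<subseteq> B \<Longrightarrow> B \<subseteq> X \<Longrightarrow> rk A \<le> rk B" by (simp add: matroid_def)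
lemma mat_sub: "matroid X rk \<Longrightarrow> A \<subseteq> X \<Longrightarrow> B \<subseteq> X \<Longrightarrow> rk (A \<union> B) + rk (A \<inter> B) \<le> rk A + rk B"
  by (simp add: matroid_def)

lemma mat_single: "matroid X rk \<Longrightarrow> e \<in> X \<Longrightarrow> rk {e} \<le> 1"
  using mat_card[of X rk "{e}"] by simp

lemma mat_ins: assumes "matroid X rk" "B \<subseteq> X" "e \<in> X"
  shows "rk (insert e B) \<le> rk B + rk {e}"
  using mat_sub[OF assms(1,2), of "{e}"] assms by simp

lemma mat_del: "matroid X rk \<Longrightarrow> X' \<subseteq> X \<Longrightarrow> matroid X' rk"
  unfolding matroid_def by (meson finite_subset subset_trans)

lemma mat_con:
  assumes m: "matroid X rk" and e: "e \<in> X" "rk {e} = 1"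
  shows "matroid (X - {e}) (\<lambda>B. rk (insert e B) - 1)"
proof -
  have ge: "rk (insert e B) \<ge> 1" if "B \<subseteq> X" for B
    using mat_mono[OF m, of "{e}" "insert e B"] that e by auto
  show ?thesis unfolding matroid_def
  proof (intro conjI allI impI)
    show "finite (X - {e})" using mat_fin[OF m] by simp
  next
    fix A assume "A \<subseteq> X - {e}"
    then have "rk (insert e A) \<le> card A + 1" "finite A"
      using mat_ins[OF m, of A e] mat_card[OF m, of A] e mat_fin[OF m] finite_subset by fastforce+
    then show "rk (insert e A) - 1 \<le> card A" by simp
  next
    fix A B assume ab: "A \<subseteq> B \<and> B \<subseteq> X - {e}"
    show "rk (insert e A) - 1 \<le> rk (insert e B) - 1"
    proof -
      from ab have "rk (insert e A) \<le> rk (insert e B)"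
        using mat_mono[OF m, of "insert e A" "insert e B"] e by auto
      then show ?thesis by simp
    qed
  next
    fix A B assume ab: "A \<subseteq> X - {e} \<and> B \<subseteq> X - {e}"
    have "rk (insert e A \<union> insert e B) + rk (insert e A \<inter> insert e B) \<le> rk (insert e A) + rk (insert e B)"
      using mat_sub[OF m, of "insert e A" "insert e B"] ab e by auto
    moreover have "insert e A \<union> insert e B = insert e (A \<union> B)" "insert e A \<inter> insert e B = insert e (A \<inter> B)" by auto
    moreover have "rk (insert e (A \<union> B)) \<ge> 1" "rk (insert e (A \<inter> B)) \<ge> 1" "rk (insert e A) \<ge> 1" "rk (insert e B) \<ge> 1"
      using ge[of "A \<union> B"] ge[of "A \<inter> B"] ge[of A] ge[of B] ab by auto
    ultimately show "rk (insert e (A \<union> B)) - 1 + (rk (insert e (A \<inter> B)) - 1) \<le> rk (insert e A) - 1 + (rk (insert e B) - 1)"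
      by simp
  qed
qed

lemma Pn_split:
  assumes m: "matroid X rk" and e: "e \<in> X"
  shows "Pn X rk = (\<Sum>A\<in>Pow (X - {e}). if rk A < rk X \<and> rk X \<le> card A then [:-1,1:]^(card A - rk X) else 0)
     + (\<Sum>A\<in>Pow (X - {e}). if rk (insert e A) < rk X \<and> rk X \<le> card A + 1 then [:-1,1:]^(card A + 1 - rk X) else 0)"
proof -
  have X: "X = insert e (X - {e})" using e by auto
  have f: "finite (X - {e})" using mat_fin[OF m] by simp
  have c: "card (insert e A) = card A + 1" if "A \<in> Pow (X - {e})" for A
  proof -
    have "finite A" "e \<notin> A" using that f by (auto intro: finite_subset)
    then show ?thesis by simp
  qed
  show ?thesis unfolding Pn_def
    apply (subst X, subst sum_Pow_insert[OF f], simp)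
    apply (rule arg_cong[where f="\<lambda>u. _ + u"], rule sum.cong, simp)
    using c by simp
qed


lemma term2_nonloop:
  assumes m: "matroid X rk" and e: "e \<in> X" "rk {e} = 1"
  shows "(\<Sum>A\<in>Pow (X - {e}). if rk (insert e A) < rk X \<and> rk X \<le> card A + 1 then [:-1,1:]^(card A + 1 - rk X) else 0)
    = Pn (X - {e}) (\<lambda>B. rk (insert e B) - 1)"
proof -
  have XX: "insert e (X - {e}) = X" using e by auto
  have r1: "rk X \<ge> 1" using mat_mono[OF m, of "{e}" X] e by auto
  have ge: "rk (insert e B) \<ge> 1" if "B \<subseteq> X" for B
    using mat_mono[OF m, of "{e}" "insert e B"] that e by auto
  show ?thesis unfolding Pn_def XX
  proof (rule sum.cong[OF refl])
    fix A assume "A \<in> Pow (X - {e})"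
    then have "rk (insert e A) \<ge> 1" using ge by auto
    then show "(if rk (insert e A) < rk X \<and> rk X \<le> card A + 1 then [:-1,1:]^(card A + 1 - rk X) else (0::int poly)) =
      (if rk (insert e A) - 1 < rk X - 1 \<and> rk X - 1 \<le> card A then [:-1,1:]^(card A - (rk X - 1)) else 0)"
      using r1 by (auto simp: Suc_diff_le)
  qed
qed

lemma Pn_normal:
  assumes m: "matroid X rk" and e: "e \<in> X" "rk {e} = 1" "rk (X - {e}) = rk X"
  shows "Pn X rk = Pn (X - {e}) rk + Pn (X - {e}) (\<lambda>B. rk (insert e B) - 1)"
  unfolding Pn_split[OF m e(1)] term2_nonloop[OF m e(1,2)] unfolding Pn_def e(3) ..

lemma Pn_coloop:
  assumes m: "matroid X rk" and e: "e \<in> X" "rk {e} = 1" "rk (X - {e}) \<noteq> rk X"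
  shows "Pn X rk = Qs (X - {e}) (rk X) + Pn (X - {e}) (\<lambda>B. rk (insert e B) - 1)"
  unfolding Pn_split[OF m e(1)] term2_nonloop[OF m e(1,2)]
proof -
  have "rk (X - {e}) \<le> rk X" using mat_mono[OF m, of "X - {e}" X] by auto
  then have lt: "rk A < rk X" if "A \<subseteq> X - {e}" for A
    using mat_mono[OF m, of A "X - {e}"] that e(3) by auto
  have "(\<Sum>A\<in>Pow (X - {e}). if rk A < rk X \<and> rk X \<le> card A then [:-1,1:]^(card A - rk X) else 0) = Qs (X - {e}) (rk X)"
    unfolding Qs_def by (rule sum.cong[OF refl]) (use lt in auto)
  then show "(\<Sum>A\<in>Pow (X - {e}). if rk A < rk X \<and> rk X \<le> card A then [:-1,1:]^(card A - rk X) else 0) + Pn (X - {e}) (\<lambda>B. rk (insert e B) - 1)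
     = Qs (X - {e}) (rk X) + Pn (X - {e}) (\<lambda>B. rk (insert e B) - 1)" by simp
qed

lemma Pn_loop:
  assumes m: "matroid X rk" and e: "e \<in> X" "rk {e} = 0" and r1: "rk X \<ge> 1"
  shows "rk (X - {e}) = rk X"
    and "Pn X rk = pCons 0 (Pn (X - {e}) rk) + [:int (card (X - {e}) choose (rk X - 1)):]"
proof -
  have XX: "insert e (X - {e}) = X" using e by auto
  have f: "finite (X - {e})" using mat_fin[OF m] by simp
  have ins: "rk (insert e A) = rk A" if "A \<subseteq> X - {e}" for A
  proof -
    have "A \<subseteq> X" using that by auto
    moreover have "rk A \<le> rk (insert e A)"
      by (rule mat_mono[OF m]) (use \<open>A \<subseteq> X\<close> e in auto)
    ultimately show ?thesis using mat_ins[OF m, of A e] e by linarith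
  qed
  show r: "rk (X - {e}) = rk X" using ins[of "X - {e}"] XX by simp
  have h: "(if rk (insert e A) < rk X \<and> rk X \<le> card A + 1 then [:-1,1:]^(card A + 1 - rk X) else 0)
     = [:-1,1:] * (if rk A < rk (X - {e}) \<and> rk (X - {e}) \<le> card A then [:-1,1:]^(card A - rk (X - {e})) else 0)
       + (if card A = rk X - 1 then (1::int poly) else 0)" if "A \<in> Pow (X - {e})" for A
  proof -
    have "rk A \<le> card A" using mat_card[OF m, of A] that by auto
    then show ?thesis unfolding r ins[of A, OF that[simplified]] using r1
      by (cases "rk X \<le> card A") (auto simp: Suc_diff_le)
  qed
  have "Pn X rk = Pn (X - {e}) rk + (\<Sum>A\<in>Pow (X - {e}). [:-1,1:] * (if rk A < rk (X - {e}) \<and> rk (X - {e}) \<le> card A then [:-1,1:]^(card A - rk (X - {e})) else 0)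
       + (if card A = rk X - 1 then (1::int poly) else 0))"
    unfolding Pn_split[OF m e(1)] unfolding Pn_def r
    by (rule arg_cong[where f="\<lambda>u. _ + u"], rule sum.cong, simp, rule h[unfolded r])
  also have "\<dots> = Pn (X - {e}) rk + [:-1,1:] * Pn (X - {e}) rk + [:int (card (X - {e}) choose (rk X - 1)):]"
    using sum_card_ind[OF f, of "rk X - 1"] by (simp add: sum.distrib sum_distrib_left Pn_def del: One_nat_def)
  finally show "Pn X rk = pCons 0 (Pn (X - {e}) rk) + [:int (card (X - {e}) choose (rk X - 1)):]"
    using Y_mult by simp
qed


lemma Pn_rk0: "rk X = 0 \<Longrightarrow> Pn X rk = 0"
  by (simp add: Pn_def)

lemma Pn_nonneg: "matroid X rk \<Longrightarrow> coeff (Pn X rk) j \<ge> 0"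
proof (induction "card X" arbitrary: X rk j rule: less_induct)
  case less
  note m = less.prems
  show ?case
  proof (cases "rk X = 0")
    case True then show ?thesis by (simp add: Pn_rk0)
  next
    case False
    have "rk {} = 0" using mat_card[OF m, of "{}"] by simp
    then have "X \<noteq> {}" using False by auto
    then obtain e where e: "e \<in> X" by auto
    have fX: "finite X" using mat_fin[OF m] .
    have lt: "card (X - {e}) < card X" using e fX by (meson card_Diff1_less)
    have mX': "matroid (X - {e}) rk" using mat_del[OF m] by auto
    have IH1: "coeff (Pn (X - {e}) rk) k \<ge> 0" for k using less.hyps[OF lt mX'] .
    show ?thesis
    proof (cases "rk {e} = 0")
      case True
      have r1: "rk X \<ge> 1" using False by simp
      show ?thesis using IH1 unfolding Pn_loop(2)[OF m e True r1] using False
        by (cases j) auto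
    next
      case nl: False
      then have e1: "rk {e} = 1" using mat_single[OF m e] by auto
      have IH2: "coeff (Pn (X - {e}) (\<lambda>B. rk (insert e B) - 1)) k \<ge> 0" for k
        using less.hyps[OF lt mat_con[OF m e e1]] .
      show ?thesis
      proof (cases "rk (X - {e}) = rk X")
        case True
        show ?thesis unfolding Pn_normal[OF m e e1 True] using IH1 IH2 by (simp add: add_nonneg_nonneg)
      next
        case co: False
        have "coeff (Qs (X - {e}) (rk X)) j \<ge> 0"
          using Qs_coeff[of "X - {e}" "rk X" j] fX False by simp
        then show ?thesis unfolding Pn_coloop[OF m e e1 co] using IH2 by (simp add: add_nonneg_nonneg)
      qed
    qed
  qed
qed

lemma Pn_pos: "matroid X rk \<Longrightarrow> A \<subseteq> X \<Longrightarrow> rk A < rk X \<Longrightarrow> j + rk X \<le> card A \<Longrightarrow> coeff (Pn X rk) j > 0"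
proof (induction "card X" arbitrary: X rk A j rule: less_induct)
  case less
  note m = less.prems(1)
  have AX: "A \<subseteq> X" "rk A < rk X" "j + rk X \<le> card A" using less.prems by auto
  have fX: "finite X" using mat_fin[OF m] .
  have fA: "finite A" using AX fX finite_subset by blast
  have "A \<noteq> {}" using AX by auto
  then obtain e where eA: "e \<in> A" by auto
  then have e: "e \<in> X" using AX by auto
  have lt: "card (X - {e}) < card X" using e fX by (meson card_Diff1_less)
  have mX': "matroid (X - {e}) rk" using mat_del[OF m] by auto
  have A'X: "A - {e} \<subseteq> X - {e}" using AX by auto
  have cA': "card (A - {e}) = card A - 1" using eA fA by simp
  have AA: "insert e (A - {e}) = A" using eA by auto
  have XX: "insert e (X - {e}) = X" using e by auto
  show ?case
  proof (cases "rk {e} = 0")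
    case True
    have r1: "rk X \<ge> 1" using AX by simp
    have r: "rk (X - {e}) = rk X" using Pn_loop(1)[OF m e True r1] .
    show ?thesis
    proof (cases j)
      case 0
      have "rk X \<le> card X" using mat_card[OF m, of X] by simp
      then have "rk X - 1 \<le> card (X - {e})" using e fX by simp
      then show ?thesis unfolding Pn_loop(2)[OF m e True r1] using 0 AX by simp
    next
      case (Suc k)
      have "rk (A - {e}) \<le> rk A" using mat_mono[OF m, of "A - {e}" A] AX by auto
      then have "coeff (Pn (X - {e}) rk) k > 0"
        using less.hyps[OF lt mX' A'X] r AX cA' Suc by simp
      then show ?thesis unfolding Pn_loop(2)[OF m e True r1] using Suc AX by simp
    qed
  next
    case nl: False
    then have e1: "rk {e} = 1" using mat_single[OF m e] by auto
    have "rk {e} \<le> rk A" using mat_mono[OF m, of "{e}" A] eA AX by auto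
    then have "coeff (Pn (X - {e}) (\<lambda>B. rk (insert e B) - 1)) j > 0"
      using e1 less.hyps[OF lt mat_con[OF m e e1] A'X] unfolding AA XX using AX cA' by simp
    moreover have "coeff (Pn (X - {e}) rk) j \<ge> 0" by (rule Pn_nonneg[OF mX'])
    moreover have "coeff (Qs (X - {e}) (rk X)) j \<ge> 0"
      using Qs_coeff[of "X - {e}" "rk X" j] fX AX by simp
    ultimately show ?thesis
      using Pn_normal[OF m e e1] Pn_coloop[OF m e e1] by (cases "rk (X - {e}) = rk X") auto
  qed
qed


lemma tutte_decomp:
  assumes m: "matroid X rk"
  shows "tutte_at_x X rk 1 = Qs X (rk X) - Pn X rk"
proof -
  have "Qs X (rk X) = tutte_at_x X rk 1 + Pn X rk"
    unfolding Qs_def Pn_def tutte_at_x_def sum.distrib[symmetric]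
  proof (rule sum.cong[OF refl])
    fix A assume "A \<in> Pow X"
    then have a: "rk A \<le> rk X" "rk A \<le> card A"
      using mat_mono[OF m, of A X] mat_card[OF m, of A] by auto
    show "(if rk X \<le> card A then [:-1,1:]^(card A - rk X) else 0) =
      smult ((1 - 1) ^ (rk X - rk A)) ([:-1,1:] ^ (card A - rk A)) +
      (if rk A < rk X \<and> rk X \<le> card A then [:-1,1:]^(card A - rk X) else (0::int poly))"
      using a by (cases "rk A = rk X") auto
  qed
  then show ?thesis by simp
qed

lemma Pn_zero:
  assumes "\<not> (\<exists>A. A \<subseteq> X \<and> rk A < rk X \<and> j + rk X \<le> card A)"
  shows "coeff (Pn X rk) j = 0"
  unfolding Pn_def coeff_sum
proof (rule sum.neutral, intro ballI)
  fix A assume "A \<in> Pow X"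
  then show "coeff (if rk A < rk X \<and> rk X \<le> card A then [:-1,1:]^(card A - rk X) else (0::int poly)) j = 0"
    using assms by (auto intro!: coeff_eq_0 simp: degree_linear_power)
qed

lemma hyper_exists:
  assumes m: "matroid X rk" and A: "A \<subseteq> X" "rk A < rk X"
  shows "\<exists>F. flat X rk F \<and> rk F = rk X - 1 \<and> A \<subseteq> F"
proof -
  define S where "S = {B. A \<subseteq> B \<and> B \<subseteq> X \<and> rk B < rk X}"
  have fX: "finite X" using mat_fin[OF m] .
  have fS: "finite S" unfolding S_def using fX by (rule rev_finite_subset[OF finite_Pow_iff[THEN iffD2]]) auto
  have AS: "A \<in> S" using A unfolding S_def by auto
  have "Max (card ` S) \<in> card ` S" using fS AS by (intro Max_in) auto
  then obtain F where FS: "F \<in> S" and cF: "card F = Max (card ` S)" by auto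
  have mx: "card B \<le> card F" if "B \<in> S" for B using fS that cF by simp
  have F: "A \<subseteq> F" "F \<subseteq> X" "rk F < rk X" using FS unfolding S_def by auto
  have fF: "finite F" using F fX finite_subset by blast
  have ext: "rk (insert e F) = rk X" if "e \<in> X" "e \<notin> F" for e
  proof -
    have "card (insert e F) > card F" using fF that by simp
    then have "insert e F \<notin> S" using mx by force
    then have "\<not> rk (insert e F) < rk X" using F that unfolding S_def by auto
    moreover have "rk (insert e F) \<le> rk X" using mat_mono[OF m, of "insert e F" X] F that by auto
    ultimately show ?thesis by simp
  qed
  have fl: "flat X rk F" unfolding flat_def
  proof (intro conjI)
    show "F \<subseteq> X" using F by simp
    show "F = {e \<in> X. rk (F \<union> {e}) = rk F}"
    proof
      show "F \<subseteq> {e \<in> X. rk (F \<union> {e}) = rk F}" using F by (auto simp: insert_absorb)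
      show "{e \<in> X. rk (F \<union> {e}) = rk F} \<subseteq> F"
      proof
        fix e assume "e \<in> {e \<in> X. rk (F \<union> {e}) = rk F}"
        then have "e \<in> X" "rk (insert e F) = rk F" by auto
        then show "e \<in> F" using ext F by fastforce
      qed
    qed
  qed
  have "F \<noteq> X" using F by auto
  then obtain e where e: "e \<in> X" "e \<notin> F" using F by auto
  have "rk (insert e F) \<le> rk F + rk {e}" using mat_ins[OF m, of F e] F e by auto
  then have "rk X \<le> rk F + 1" using ext[OF e] mat_single[OF m e(1)] by simp
  then have "rk F = rk X - 1" using F by simp
  then show ?thesis using fl F by blast
qed

theorem theorem3p3:
  fixes X :: "'a set" and rk :: "'a set \<Rightarrow> nat" and j :: nat
  assumes "matroid X rk" and "rk X \<ge> 1"
  shows "f1 X rk < j + rk X \<longleftrightarrow>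
         coeff (tutte_at_x X rk 1) j =
           (if j + 1 \<le> card X then int ((card X - j - 1) choose (rk X - 1)) else 0)"
proof -
  note m = assms(1)
  have fX: "finite X" using mat_fin[OF m] .
  define Sf where "Sf = {card F | F. flat X rk F \<and> rk F = rk X - 1}"
  have fSf: "finite Sf"
  proof (rule finite_subset[of _ "card ` Pow X"])
    show "Sf \<subseteq> card ` Pow X" unfolding Sf_def flat_def by auto
    show "finite (card ` Pow X)" using fX by simp
  qed
  have f1: "f1 X rk = Max Sf" unfolding f1_def Sf_def ..
  have "rk {} = 0" using mat_card[OF m, of "{}"] by simp
  then obtain F0 where "flat X rk F0 \<and> rk F0 = rk X - 1"
    using hyper_exists[OF m, of "{}"] assms(2) by auto
  then have neSf: "Sf \<noteq> {}" unfolding Sf_def by auto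
  have H: "j + rk X \<le> f1 X rk \<longleftrightarrow> (\<exists>A. A \<subseteq> X \<and> rk A < rk X \<and> j + rk X \<le> card A)"
  proof
    assume a: "j + rk X \<le> f1 X rk"
    have "Max Sf \<in> Sf" using fSf neSf by (rule Max_in)
    then obtain F where "flat X rk F" "rk F = rk X - 1" "card F = f1 X rk" unfolding Sf_def f1 by auto
    then show "\<exists>A. A \<subseteq> X \<and> rk A < rk X \<and> j + rk X \<le> card A"
      using a assms(2) unfolding flat_def by (intro exI[of _ F]) auto
  next
    assume "\<exists>A. A \<subseteq> X \<and> rk A < rk X \<and> j + rk X \<le> card A"
    then obtain A where A: "A \<subseteq> X" "rk A < rk X" "j + rk X \<le> card A" by blast
    obtain F where F: "flat X rk F" "rk F = rk X - 1" "A \<subseteq> F" using hyper_exists[OF m A(1,2)] by blast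
    have "F \<subseteq> X" using F unfolding flat_def by simp
    then have "card A \<le> card F" using card_mono[OF finite_subset[OF _ fX] F(3)] by simp
    moreover have "card F \<in> Sf" using F unfolding Sf_def by auto
    then have "card F \<le> Max Sf" using fSf by simp
    ultimately show "j + rk X \<le> f1 X rk" using A f1 by simp
  qed
  have c: "coeff (tutte_at_x X rk 1) j = (if j + 1 \<le> card X then int ((card X - j - 1) choose (rk X - 1)) else 0) - coeff (Pn X rk) j"
    unfolding tutte_decomp[OF m] using Qs_coeff[OF fX assms(2)] by simp
  show ?thesis
  proof (cases "\<exists>A. A \<subseteq> X \<and> rk A < rk X \<and> j + rk X \<le> card A")
    case True
    then obtain A where "A \<subseteq> X" "rk A < rk X" "j + rk X \<le> card A" by blast
    then have "coeff (Pn X rk) j > 0" using Pn_pos[OF m] by blast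
    then show ?thesis using c H True by simp
  next
    case False
    then have "\<not> j + rk X \<le> f1 X rk" using H by blast
    then show ?thesis using c Pn_zero[OF False] by simp
  qed
qed

end
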